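(* Let $\mathcal{A}$ be a family of finite subsets of $\omega_1$ closed under taking subsets and containing all singletons, and let $\mathcal{D}$ be a family of finite sets of consecutive pairs containing every single pair of $\omega_1$. Then $(\mathcal{X}_{\mathcal{A},\mathcal{D}},\|\cdot\|_{\mathcal{A},\mathcal{D}})$ is a Hilbert generated Banach space.
   Context: $c_{00}(\omega_1)$ is the set of finitely supported $x\in\mathbb{R}^{\omega_1}$; $\|x\|_\mathcal{A}=\sup_{A\in\mathcal{A}}\sqrt{\sum_{\alpha\in A}x(\alpha)^2}$. A set of consecutive pairs is a set $D$ of two-element subsets of $\omega_1$ such that for distinct $a,b\in D$, $\max a<\min b$ or $\max b<\min a$; "$\mathcal{D}$ contains every single pair" means $\{p\}\in\mathcal{D}$ for every two-element $p\subseteq\omega_1$. $\nu_\mathcal{D}(x)=\sup_{D\in\mathcal{D}}\sqrt{\sum_{\{\alpha,\beta\}\in D}|x(\alpha)-x(\beta)|^2}$, $\|x\|_{\mathcal{A},\mathcal{D}}=\nu_\mathcal{D}(x)+\|x\|_\mathcal{A}$, and $\mathcal{X}_{\mathcal{A},\mathcal{D}}$ is the completion of $c_{00}(\omega_1)$ with respect to $\|\cdot\|_{\mathcal{A},\mathcal{D}}$ (realized as the closure of $c_{00}(\omega_1)$ in $\{x\in\mathbb{R}^{\omega_1}:\|x\|_{\mathcal{A},\mathcal{D}}<\infty\}$). A Banach space is Hilbert generated if it is the dense range of a bounded linear operator from a Hilbert space. *)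

theory Defs
  imports "HOL-Analysis.Analysis"
begin

text \<open>The type 'a with its well-order plays the role of omega_1 (see theorem assumptions).
  Vectors in R^omega_1 are functions 'a \<Rightarrow> real.\<close>

definition c00 :: "('a \<Rightarrow> real) set" where
  "c00 = {x. finite {\<alpha>. x \<alpha> \<noteq> 0}}"

definition normA :: "'a set set \<Rightarrow> ('a \<Rightarrow> real) \<Rightarrow> ereal" where
  "normA \<A> x = (SUP A\<in>\<A>. ereal (sqrt (\<Sum>\<alpha>\<in>A. (x \<alpha>)^2)))"

definition consecutive_pairs :: "'a::linorder set set \<Rightarrow> bool" where
  "consecutive_pairs D \<longleftrightarrow> (\<forall>p\<in>D. card p = 2) \<and>
     (\<forall>a\<in>D. \<forall>b\<in>D. a \<noteq> b \<longrightarrow> Max a < Min b \<or> Max b < Min a)"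

definition nuD :: "'a::linorder set set set \<Rightarrow> ('a \<Rightarrow> real) \<Rightarrow> ereal" where
  "nuD \<D> x = (SUP D\<in>\<D>. ereal (sqrt (\<Sum>p\<in>D. (x (Min p) - x (Max p))^2)))"

definition normAD :: "'a set set \<Rightarrow> 'a::linorder set set set \<Rightarrow> ('a \<Rightarrow> real) \<Rightarrow> ereal" where
  "normAD \<A> \<D> x = nuD \<D> x + normA \<A> x"

definition XAD :: "'a set set \<Rightarrow> 'a::linorder set set set \<Rightarrow> ('a \<Rightarrow> real) set" where
  "XAD \<A> \<D> = {x. normAD \<A> \<D> x < \<infinity> \<and>
      (\<forall>\<epsilon>>0. \<exists>y\<in>c00. normAD \<A> \<D> (\<lambda>\<alpha>. x \<alpha> - y \<alpha>) < ereal \<epsilon>)}"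

definition banach_wrt :: "('a \<Rightarrow> real) set \<Rightarrow> (('a \<Rightarrow> real) \<Rightarrow> ereal) \<Rightarrow> bool" where
  "banach_wrt X N \<longleftrightarrow>
     (\<lambda>_. 0) \<in> X \<and> (\<forall>x\<in>X. \<forall>y\<in>X. (\<lambda>\<alpha>. x \<alpha> + y \<alpha>) \<in> X) \<and> (\<forall>x\<in>X. \<forall>c::real. (\<lambda>\<alpha>. c * x \<alpha>) \<in> X) \<and>
     (\<forall>x\<in>X. N x < \<infinity>) \<and>
     (\<forall>x\<in>X. N x = 0 \<longrightarrow> x = (\<lambda>_. 0)) \<and>
     (\<forall>x\<in>X. \<forall>y\<in>X. N (\<lambda>\<alpha>. x \<alpha> + y \<alpha>) \<le> N x + N y) \<and>
     (\<forall>x\<in>X. \<forall>c::real. N (\<lambda>\<alpha>. c * x \<alpha>) = ereal \<bar>c\<bar> * N x) \<and>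
     (\<forall>u::nat \<Rightarrow> ('a \<Rightarrow> real). (\<forall>n. u n \<in> X) \<longrightarrow>
        (\<forall>\<epsilon>>0. \<exists>M. \<forall>m\<ge>M. \<forall>n\<ge>M. N (\<lambda>\<alpha>. u m \<alpha> - u n \<alpha>) < ereal \<epsilon>) \<longrightarrow>
        (\<exists>x\<in>X. \<forall>\<epsilon>>0. \<exists>M. \<forall>n\<ge>M. N (\<lambda>\<alpha>. u n \<alpha> - x \<alpha>) < ereal \<epsilon>))"

definition l2 :: "('b \<Rightarrow> real) set" where
  "l2 = {h. (\<lambda>\<gamma>. (h \<gamma>)^2) summable_on UNIV}"

definition l2norm :: "('b \<Rightarrow> real) \<Rightarrow> real" where
  "l2norm h = sqrt (infsum (\<lambda>\<gamma>. (h \<gamma>)^2) UNIV)"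

definition l2_generated :: "('b \<Rightarrow> real) itself \<Rightarrow> ('a \<Rightarrow> real) set \<Rightarrow> (('a \<Rightarrow> real) \<Rightarrow> ereal) \<Rightarrow> bool" where
  "l2_generated _ X N \<longleftrightarrow> (\<exists>T :: ('b \<Rightarrow> real) \<Rightarrow> ('a \<Rightarrow> real).
      (\<forall>h\<in>l2. T h \<in> X) \<and>
      (\<forall>h\<in>l2. \<forall>g\<in>l2. \<forall>a b::real. T (\<lambda>\<gamma>. a * h \<gamma> + b * g \<gamma>) = (\<lambda>\<alpha>. a * T h \<alpha> + b * T g \<alpha>)) \<and>
      (\<exists>C::real. \<forall>h\<in>l2. N (T h) \<le> ereal (C * l2norm h)) \<and>
      (\<forall>x\<in>X. \<forall>\<epsilon>>0. \<exists>h\<in>l2. N (\<lambda>\<alpha>. T h \<alpha> - x \<alpha>) < ereal \<epsilon>))"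

end

theory Submission
  imports Defs
begin


definition qq :: "'s set \<Rightarrow> ('s \<Rightarrow> ('a \<Rightarrow> real) \<Rightarrow> real) \<Rightarrow> ('a \<Rightarrow> real) \<Rightarrow> ereal" where
  "qq S t x = (SUP s\<in>S. ereal (t s x))"

definition good :: "'s set \<Rightarrow> ('s \<Rightarrow> ('a \<Rightarrow> real) \<Rightarrow> real) \<Rightarrow> bool" where
  "good S t \<longleftrightarrow> S \<noteq> {} \<and> (\<forall>s x. 0 \<le> t s x) \<and>
     (\<forall>s x y. t s (\<lambda>\<alpha>. x \<alpha> + y \<alpha>) \<le> t s x + t s y) \<and>
     (\<forall>s x c. t s (\<lambda>\<alpha>. c * x \<alpha>) = \<bar>c\<bar> * t s x) \<and>
     (\<forall>s z z0. (\<forall>\<alpha>. (\<lambda>m. z m \<alpha>) \<longlonglongrightarrow> z0 \<alpha>) \<longrightarrow> (\<lambda>m::nat. t s (z m)) \<longlonglongrightarrow> t s z0)"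

lemma q_nonneg: assumes "good S t" shows "0 \<le> qq S t x"
proof -
  from assms obtain s where s: "s \<in> S" unfolding good_def by blast
  have "ereal 0 \<le> ereal (t s x)" using assms unfolding good_def by simp
  also have "\<dots> \<le> qq S t x" unfolding qq_def using s by (rule SUP_upper)
  finally show ?thesis by (simp add: zero_ereal_def)
qed

lemma q_le: "qq S t x \<le> ereal e \<longleftrightarrow> (\<forall>s\<in>S. t s x \<le> e)"
  unfolding qq_def by (simp add: SUP_le_iff)

lemma q_triangle: assumes "good S t"
  shows "qq S t (\<lambda>\<alpha>. x \<alpha> + y \<alpha>) \<le> qq S t x + qq S t y"
  unfolding qq_def
proof (rule SUP_least)
  fix s assume s: "s \<in> S"
  have "ereal (t s (\<lambda>\<alpha>. x \<alpha> + y \<alpha>)) \<le> ereal (t s x) + ereal (t s y)"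
    using assms unfolding good_def by simp
  also have "\<dots> \<le> (SUP s\<in>S. ereal (t s x)) + (SUP s\<in>S. ereal (t s y))"
    by (intro add_mono SUP_upper s)
  finally show "ereal (t s (\<lambda>\<alpha>. x \<alpha> + y \<alpha>)) \<le> (SUP s\<in>S. ereal (t s x)) + (SUP s\<in>S. ereal (t s y))" .
qed

lemma q_scale: assumes "good S t"
  shows "qq S t (\<lambda>\<alpha>. c * x \<alpha>) = ereal \<bar>c\<bar> * qq S t x"
proof -
  have "qq S t (\<lambda>\<alpha>. c * x \<alpha>) = (SUP s\<in>S. ereal \<bar>c\<bar> * ereal (t s x))"
    unfolding qq_def using assms unfolding good_def by simp
  also have "\<dots> = ereal \<bar>c\<bar> * qq S t x"
    unfolding qq_def using assms unfolding good_def by (intro SUP_ereal_mult_left) auto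
  finally show ?thesis .
qed

lemma q_limit: assumes "good S t" and "\<forall>m\<ge>M. qq S t (z m) \<le> ereal e"
  and "\<forall>\<alpha>. (\<lambda>m. z m \<alpha>) \<longlonglongrightarrow> z0 \<alpha>"
  shows "qq S t z0 \<le> ereal e"
  unfolding q_le
proof
  fix s assume s: "s \<in> S"
  have lim: "(\<lambda>m. t s (z m)) \<longlonglongrightarrow> t s z0" using assms(1,3) unfolding good_def by blast
  have "eventually (\<lambda>m. t s (z m) \<le> e) sequentially"
    using assms(2) s unfolding q_le eventually_sequentially by blast
  then show "t s z0 \<le> e" using lim by (intro tendsto_upperbound[OF lim]) auto
qed

definition NN where "NN S1 t1 S2 t2 x = qq S1 t1 x + qq S2 t2 x"

definition XX where "XX S1 t1 S2 t2 = {x. NN S1 t1 S2 t2 x < \<infinity> \<and>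
      (\<forall>\<epsilon>>0. \<exists>y\<in>c00. NN S1 t1 S2 t2 (\<lambda>\<alpha>. x \<alpha> - y \<alpha>) < ereal \<epsilon>)}"

lemma ereal_add_lt: fixes a b :: ereal
  assumes "0 \<le> a" "0 \<le> b" "a < ereal e1" "b < ereal e2" shows "a + b < ereal (e1 + e2)"
  using assms by (cases a; cases b) auto

lemma ereal_add_le_lt: fixes a b :: ereal
  assumes "0 \<le> a" "0 \<le> b" "a \<le> ereal e1" "b < ereal e2" shows "a + b < ereal (e1 + e2)"
  using assms by (cases a; cases b) auto


context
  fixes S1 :: "'s set" and t1 :: "'s \<Rightarrow> ('a \<Rightarrow> real) \<Rightarrow> real"
    and S2 :: "'u set" and t2 :: "'u \<Rightarrow> ('a \<Rightarrow> real) \<Rightarrow> real"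
  assumes g1: "good S1 t1" and g2: "good S2 t2"
begin

abbreviation "N \<equiv> NN S1 t1 S2 t2"

lemma N_nonneg: "0 \<le> N x"
  unfolding NN_def using q_nonneg[OF g1] q_nonneg[OF g2] by simp

lemma N_ge1: "qq S1 t1 x \<le> N x"
  unfolding NN_def using q_nonneg[OF g2] by (simp add: add_increasing2)

lemma N_ge2: "qq S2 t2 x \<le> N x"
  unfolding NN_def using q_nonneg[OF g1] by (simp add: add_increasing)

lemma N_triangle: "N (\<lambda>\<alpha>. x \<alpha> + y \<alpha>) \<le> N x + N y"
proof -
  have "N (\<lambda>\<alpha>. x \<alpha> + y \<alpha>) \<le> (qq S1 t1 x + qq S1 t1 y) + (qq S2 t2 x + qq S2 t2 y)"
    unfolding NN_def by (intro add_mono q_triangle g1 g2)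
  also have "\<dots> = N x + N y" unfolding NN_def by (simp add: ac_simps)
  finally show ?thesis .
qed

lemma N_scale: "N (\<lambda>\<alpha>. c * x \<alpha>) = ereal \<bar>c\<bar> * N x"
  unfolding NN_def q_scale[OF g1] q_scale[OF g2]
  by (rule ereal_right_distrib[symmetric]) (intro q_nonneg g1 g2)+

lemma N_swap: "N (\<lambda>\<alpha>. x \<alpha> - y \<alpha>) = N (\<lambda>\<alpha>. y \<alpha> - x \<alpha>)"
proof -
  have "N (\<lambda>\<alpha>. y \<alpha> - x \<alpha>) = N (\<lambda>\<alpha>. (-1) * (x \<alpha> - y \<alpha>))" by simp
  also have "\<dots> = N (\<lambda>\<alpha>. x \<alpha> - y \<alpha>)" unfolding N_scale by simp
  finally show ?thesis by simp
qed

lemma N_zero: "N (\<lambda>_. 0) = 0"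
  using N_scale[of 0 "\<lambda>_. 0"] by (simp flip: zero_ereal_def)

lemma N_diff3: "N (\<lambda>\<alpha>. x \<alpha> - z \<alpha>) \<le> N (\<lambda>\<alpha>. x \<alpha> - y \<alpha>) + N (\<lambda>\<alpha>. y \<alpha> - z \<alpha>)"
  using N_triangle[of "\<lambda>\<alpha>. x \<alpha> - y \<alpha>" "\<lambda>\<alpha>. y \<alpha> - z \<alpha>"] by simp


lemma c00_add: "x \<in> c00 \<Longrightarrow> y \<in> c00 \<Longrightarrow> (\<lambda>\<alpha>. x \<alpha> + y \<alpha>) \<in> c00"
  unfolding c00_def by (auto intro: finite_subset[of _ "{\<alpha>. x \<alpha> \<noteq> 0} \<union> {\<alpha>. y \<alpha> \<noteq> 0}"])

lemma c00_scale: "x \<in> c00 \<Longrightarrow> (\<lambda>\<alpha>. c * x \<alpha>) \<in> c00"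
  unfolding c00_def by (auto elim: finite_subset[rotated])

lemma c00_zero: "(\<lambda>_. 0) \<in> c00"
  unfolding c00_def by simp

lemma X_zero: "(\<lambda>_. 0) \<in> XX S1 t1 S2 t2"
  unfolding XX_def using N_zero c00_zero by (auto intro!: bexI[of _ "\<lambda>_. 0"])

lemma X_fin: "x \<in> XX S1 t1 S2 t2 \<Longrightarrow> N x < \<infinity>"
  unfolding XX_def by auto

lemma X_approx: "x \<in> XX S1 t1 S2 t2 \<Longrightarrow> e > 0 \<Longrightarrow> \<exists>y\<in>c00. N (\<lambda>\<alpha>. x \<alpha> - y \<alpha>) < ereal e"
  unfolding XX_def by auto

lemma X_add: assumes x: "x \<in> XX S1 t1 S2 t2" and y: "y \<in> XX S1 t1 S2 t2"
  shows "(\<lambda>\<alpha>. x \<alpha> + y \<alpha>) \<in> XX S1 t1 S2 t2"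
proof -
  have "N (\<lambda>\<alpha>. x \<alpha> + y \<alpha>) \<le> N x + N y" by (rule N_triangle)
  also have "\<dots> < \<infinity>" using X_fin[OF x] X_fin[OF y] by simp
  finally have fin: "N (\<lambda>\<alpha>. x \<alpha> + y \<alpha>) < \<infinity>" .
  have "\<exists>w\<in>c00. N (\<lambda>\<alpha>. (x \<alpha> + y \<alpha>) - w \<alpha>) < ereal e" if e: "e > 0" for e
  proof -
    obtain x' where x': "x' \<in> c00" "N (\<lambda>\<alpha>. x \<alpha> - x' \<alpha>) < ereal (e/2)" using X_approx[OF x, of "e/2"] e by auto
    obtain y' where y': "y' \<in> c00" "N (\<lambda>\<alpha>. y \<alpha> - y' \<alpha>) < ereal (e/2)" using X_approx[OF y, of "e/2"] e by auto
    have "N (\<lambda>\<alpha>. (x \<alpha> + y \<alpha>) - (x' \<alpha> + y' \<alpha>)) = N (\<lambda>\<alpha>. (x \<alpha> - x' \<alpha>) + (y \<alpha> - y' \<alpha>))"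
      by (simp add: algebra_simps)
    also have "\<dots> \<le> N (\<lambda>\<alpha>. x \<alpha> - x' \<alpha>) + N (\<lambda>\<alpha>. y \<alpha> - y' \<alpha>)" by (rule N_triangle)
    also have "\<dots> < ereal (e/2 + e/2)" by (intro ereal_add_lt N_nonneg x'(2) y'(2))
    finally show ?thesis using c00_add[OF x'(1) y'(1)] by auto
  qed
  then show ?thesis unfolding XX_def using fin by auto
qed

lemma X_scale: assumes x: "x \<in> XX S1 t1 S2 t2"
  shows "(\<lambda>\<alpha>. c * x \<alpha>) \<in> XX S1 t1 S2 t2"
proof (cases "c = 0")
  case True then show ?thesis using X_zero by simp
next
  case False
  have fin: "N (\<lambda>\<alpha>. c * x \<alpha>) < \<infinity>" unfolding N_scale using X_fin[OF x] by simp
  have "\<exists>w\<in>c00. N (\<lambda>\<alpha>. c * x \<alpha> - w \<alpha>) < ereal e" if e: "e > 0" for e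
  proof -
    have ce: "e / \<bar>c\<bar> > 0" using e False by simp
    obtain x' where x': "x' \<in> c00" "N (\<lambda>\<alpha>. x \<alpha> - x' \<alpha>) < ereal (e/\<bar>c\<bar>)" using X_approx[OF x ce] by auto
    have "N (\<lambda>\<alpha>. c * x \<alpha> - c * x' \<alpha>) = N (\<lambda>\<alpha>. c * (x \<alpha> - x' \<alpha>))"
      by (simp add: algebra_simps)
    also have "\<dots> = ereal \<bar>c\<bar> * N (\<lambda>\<alpha>. x \<alpha> - x' \<alpha>)" by (rule N_scale)
    also have "\<dots> < ereal \<bar>c\<bar> * ereal (e/\<bar>c\<bar>)"
      using x'(2) False N_nonneg[of "\<lambda>\<alpha>. x \<alpha> - x' \<alpha>"]
      by (cases "N (\<lambda>\<alpha>. x \<alpha> - x' \<alpha>)") (auto simp: less_divide_eq mult.commute)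
    also have "\<dots> = ereal e" using False by simp
    finally show ?thesis using c00_scale[OF x'(1)] by auto
  qed
  then show ?thesis unfolding XX_def using fin by auto
qed

lemma N_dom: assumes dom: "\<forall>x \<alpha>. ereal \<bar>x \<alpha>\<bar> \<le> qq S2 t2 x"
  shows "ereal \<bar>x \<alpha>\<bar> \<le> N x"
  using dom N_ge2 order_trans by blast

lemma X_complete: assumes dom: "\<forall>x \<alpha>. ereal \<bar>x \<alpha>\<bar> \<le> qq S2 t2 x"
  and u: "\<forall>n::nat. u n \<in> XX S1 t1 S2 t2"
  and C: "\<forall>\<epsilon>>0. \<exists>M. \<forall>m\<ge>M. \<forall>n\<ge>M. N (\<lambda>\<alpha>. u m \<alpha> - u n \<alpha>) < ereal \<epsilon>"
  shows "\<exists>x\<in>XX S1 t1 S2 t2. \<forall>\<epsilon>>0. \<exists>M. \<forall>n\<ge>M. N (\<lambda>\<alpha>. u n \<alpha> - x \<alpha>) < ereal \<epsilon>"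
proof -
  have "Cauchy (\<lambda>n. u n \<alpha>)" for \<alpha>
  proof (rule metric_CauchyI)
    fix e :: real assume e: "e > 0"
    obtain M where M: "\<forall>m\<ge>M. \<forall>n\<ge>M. N (\<lambda>\<alpha>. u m \<alpha> - u n \<alpha>) < ereal e" using C e by blast
    have "\<forall>m\<ge>M. \<forall>n\<ge>M. dist (u m \<alpha>) (u n \<alpha>) < e"
    proof (intro allI impI)
      fix m n assume "m \<ge> M" "n \<ge> M"
      then have "ereal \<bar>u m \<alpha> - u n \<alpha>\<bar> < ereal e"
        using M N_dom[OF dom, of "\<lambda>\<alpha>. u m \<alpha> - u n \<alpha>" \<alpha>] by (meson order.strict_trans1)
      then show "dist (u m \<alpha>) (u n \<alpha>) < e" by (simp add: dist_real_def)
    qed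
    then show "\<exists>M. \<forall>m\<ge>M. \<forall>n\<ge>M. dist (u m \<alpha>) (u n \<alpha>) < e" by blast
  qed
  then have "convergent (\<lambda>n. u n \<alpha>)" for \<alpha> by (simp add: Cauchy_convergent_iff)
  define x where "x = (\<lambda>\<alpha>. lim (\<lambda>n. u n \<alpha>))"
  have lim: "\<forall>\<alpha>. (\<lambda>n. u n \<alpha>) \<longlonglongrightarrow> x \<alpha>"
    unfolding x_def using \<open>\<And>\<alpha>. convergent (\<lambda>n. u n \<alpha>)\<close> convergent_LIMSEQ_iff by blast
  have key: "\<exists>M. \<forall>n\<ge>M. N (\<lambda>\<alpha>. u n \<alpha> - x \<alpha>) \<le> ereal e" if e: "e > 0" for e
  proof -
    obtain M where M: "\<forall>m\<ge>M. \<forall>n\<ge>M. N (\<lambda>\<alpha>. u m \<alpha> - u n \<alpha>) < ereal (e/2)" using C e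
      by (meson half_gt_zero)
    have "N (\<lambda>\<alpha>. u n \<alpha> - x \<alpha>) \<le> ereal e" if n: "n \<ge> M" for n
    proof -
      have l: "\<forall>\<alpha>. (\<lambda>m. u n \<alpha> - u m \<alpha>) \<longlonglongrightarrow> u n \<alpha> - x \<alpha>"
        using lim by (auto intro: tendsto_intros)
      have b1: "\<forall>m\<ge>M. qq S1 t1 (\<lambda>\<alpha>. u n \<alpha> - u m \<alpha>) \<le> ereal (e/2)"
        using M n N_ge1 by (meson less_imp_le order_trans)
      have b2: "\<forall>m\<ge>M. qq S2 t2 (\<lambda>\<alpha>. u n \<alpha> - u m \<alpha>) \<le> ereal (e/2)"
        using M n N_ge2 by (meson less_imp_le order_trans)
      have "N (\<lambda>\<alpha>. u n \<alpha> - x \<alpha>) \<le> ereal (e/2) + ereal (e/2)"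
        unfolding NN_def
        by (intro add_mono q_limit[OF g1 b1 l] q_limit[OF g2 b2 l])
      then show ?thesis by simp
    qed
    then show ?thesis by blast
  qed
  have conv: "\<forall>\<epsilon>>0. \<exists>M. \<forall>n\<ge>M. N (\<lambda>\<alpha>. u n \<alpha> - x \<alpha>) < ereal \<epsilon>"
  proof (intro allI impI)
    fix e :: real assume e: "e > 0"
    obtain M where "\<forall>n\<ge>M. N (\<lambda>\<alpha>. u n \<alpha> - x \<alpha>) \<le> ereal (e/2)" using key[of "e/2"] e by auto
    moreover have "ereal (e/2) < ereal e" using e by simp
    ultimately show "\<exists>M. \<forall>n\<ge>M. N (\<lambda>\<alpha>. u n \<alpha> - x \<alpha>) < ereal e" by (meson order.strict_trans1)
  qed
  have xX: "x \<in> XX S1 t1 S2 t2"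
  proof -
    obtain M where M: "\<forall>n\<ge>M. N (\<lambda>\<alpha>. u n \<alpha> - x \<alpha>) \<le> ereal 1" using key[of 1] by auto
    have "x = (\<lambda>\<alpha>. (x \<alpha> - u M \<alpha>) + u M \<alpha>)" by simp
    then have "N x \<le> N (\<lambda>\<alpha>. x \<alpha> - u M \<alpha>) + N (u M)" using N_triangle by metis
    also have "\<dots> = N (\<lambda>\<alpha>. u M \<alpha> - x \<alpha>) + N (u M)" using N_swap by metis
    also have "\<dots> < \<infinity>" using M X_fin[of "u M"] u by auto
    finally have fin: "N x < \<infinity>" .
    have "\<exists>y\<in>c00. N (\<lambda>\<alpha>. x \<alpha> - y \<alpha>) < ereal e" if e: "e > 0" for e
    proof -
      obtain n where n: "N (\<lambda>\<alpha>. u n \<alpha> - x \<alpha>) \<le> ereal (e/2)" using key[of "e/2"] e by auto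
      obtain y where y: "y \<in> c00" "N (\<lambda>\<alpha>. u n \<alpha> - y \<alpha>) < ereal (e/2)"
        using X_approx[of "u n" "e/2"] u e by auto
      have "N (\<lambda>\<alpha>. x \<alpha> - y \<alpha>) \<le> N (\<lambda>\<alpha>. x \<alpha> - u n \<alpha>) + N (\<lambda>\<alpha>. u n \<alpha> - y \<alpha>)" by (rule N_diff3)
      also have "\<dots> < ereal (e/2 + e/2)"
        using n y(2) N_swap[of x "u n"] by (intro ereal_add_le_lt N_nonneg) auto
      finally show ?thesis using y(1) by auto
    qed
    then show ?thesis unfolding XX_def using fin by auto
  qed
  show ?thesis using xX conv by blast
qed

theorem banach_generic: assumes dom: "\<forall>x \<alpha>. ereal \<bar>x \<alpha>\<bar> \<le> qq S2 t2 x"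
  shows "banach_wrt (XX S1 t1 S2 t2) N"
  unfolding banach_wrt_def
proof (intro conjI ballI allI impI)
  fix x assume x: "x \<in> XX S1 t1 S2 t2" and "N x = 0"
  then have "ereal \<bar>x \<alpha>\<bar> \<le> 0" for \<alpha> using N_dom[OF dom, of x \<alpha>] by simp
  then show "x = (\<lambda>_. 0)" by (auto simp: zero_ereal_def)
next
  fix x assume "x \<in> XX S1 t1 S2 t2" then show "N x < \<infinity>" by (rule X_fin)
qed (auto intro: X_zero X_add X_scale X_fin N_triangle N_scale X_complete[OF dom])


lemma c00_l2: "y \<in> c00 \<Longrightarrow> y \<in> l2"
  unfolding c00_def l2_def
  by (auto intro!: finite_nonzero_values_imp_summable_on elim: finite_subset[rotated])

lemma l2_sum_le: assumes "h \<in> l2" "finite G"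
  shows "(\<Sum>\<alpha>\<in>G. (h \<alpha>)^2) \<le> infsum (\<lambda>\<gamma>. (h \<gamma>)^2) UNIV"
  using assms unfolding l2_def by (intro finite_sum_le_infsum) auto

lemma l2_in_X: assumes bnd: "\<forall>z B. (\<forall>G. finite G \<longrightarrow> (\<Sum>\<alpha>\<in>G. (z \<alpha>)^2) \<le> B) \<longrightarrow> N z \<le> ereal (3 * sqrt B)"
  and h: "h \<in> l2"
  shows "h \<in> XX S1 t1 S2 t2"
proof -
  define S where "S = infsum (\<lambda>\<gamma>. (h \<gamma>)^2) UNIV"
  have "N h \<le> ereal (3 * sqrt S)" unfolding S_def by (rule bnd[rule_format], rule l2_sum_le[OF h])
  then have fin: "N h < \<infinity>" using order.strict_trans1 by fastforce
  have "\<exists>y\<in>c00. N (\<lambda>\<alpha>. h \<alpha> - y \<alpha>) < ereal e" if e: "e > 0" for e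
  proof -
    define d where "d = (e/4)^2"
    have d: "d > 0" using e unfolding d_def by simp
    have hs: "((\<lambda>\<gamma>. (h \<gamma>)^2) has_sum S) UNIV" using h unfolding l2_def S_def
      using has_sum_infsum by blast
    then have "eventually (\<lambda>F. dist (sum (\<lambda>\<gamma>. (h \<gamma>)^2) F) S < d) (finite_subsets_at_top UNIV)"
      unfolding has_sum_def using d tendsto_iff by blast
    then obtain F where F: "finite F" "dist (sum (\<lambda>\<gamma>. (h \<gamma>)^2) F) S < d"
      unfolding eventually_finite_subsets_at_top by blast
    define y where "y = (\<lambda>\<alpha>. if \<alpha> \<in> F then h \<alpha> else 0)"
    have yc: "y \<in> c00" unfolding c00_def y_def using F(1) by (auto elim: finite_subset[rotated])
    have tail: "(\<Sum>\<alpha>\<in>G. (h \<alpha> - y \<alpha>)^2) \<le> d" if G: "finite G" for G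
    proof -
      have "(\<Sum>\<alpha>\<in>G. (h \<alpha> - y \<alpha>)^2) = (\<Sum>\<alpha>\<in>G - F. (h \<alpha>)^2)"
        unfolding y_def by (rule sum.mono_neutral_cong_right) (use G in auto)
      also have "\<dots> = (\<Sum>\<alpha>\<in>G \<union> F. (h \<alpha>)^2) - (\<Sum>\<alpha>\<in>F. (h \<alpha>)^2)"
      proof -
        have "G \<union> F = (G - F) \<union> F" by auto
        then have "(\<Sum>\<alpha>\<in>G \<union> F. (h \<alpha>)^2) = (\<Sum>\<alpha>\<in>G - F. (h \<alpha>)^2) + (\<Sum>\<alpha>\<in>F. (h \<alpha>)^2)"
          using sum.subset_diff[of F "G \<union> F" "\<lambda>\<alpha>. (h \<alpha>)^2"] G F(1) by (simp add: Un_Diff)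
        then show ?thesis by simp
      qed
      also have "\<dots> \<le> S - (\<Sum>\<alpha>\<in>F. (h \<alpha>)^2)"
        using l2_sum_le[OF h, of "G \<union> F"] G F(1) unfolding S_def by simp
      also have "\<dots> \<le> d" using F(2) by (simp add: dist_real_def)
      finally show ?thesis .
    qed
    have "N (\<lambda>\<alpha>. h \<alpha> - y \<alpha>) \<le> ereal (3 * sqrt d)" by (rule bnd[rule_format], rule tail)
    also have "3 * sqrt d = 3 * (e/4)" unfolding d_def using e by simp
    also have "ereal (3 * (e/4)) < ereal e" using e by simp
    finally show ?thesis using yc by blast
  qed
  then show ?thesis unfolding XX_def using fin by auto
qed

theorem l2_generic: assumes bnd: "\<forall>z B. (\<forall>G. finite G \<longrightarrow> (\<Sum>\<alpha>\<in>G. (z \<alpha>)^2) \<le> B) \<longrightarrow> N z \<le> ereal (3 * sqrt B)"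
  shows "l2_generated TYPE('a \<Rightarrow> real) (XX S1 t1 S2 t2) N"
  unfolding l2_generated_def
proof (intro exI[of _ "\<lambda>h. h"] conjI ballI allI impI)
  fix h :: "'a \<Rightarrow> real" assume "h \<in> l2" then show "h \<in> XX S1 t1 S2 t2" by (rule l2_in_X[OF bnd])
next
  show "\<exists>C. \<forall>h\<in>l2. N h \<le> ereal (C * l2norm h)"
    unfolding l2norm_def by (intro exI[of _ 3] ballI, rule bnd[rule_format], rule l2_sum_le)
next
  fix x :: "'a \<Rightarrow> real" and e :: real assume x: "x \<in> XX S1 t1 S2 t2" and e: "e > 0"
  then obtain y where y: "y \<in> c00" "N (\<lambda>\<alpha>. x \<alpha> - y \<alpha>) < ereal e" using X_approx by blast
  then show "\<exists>h\<in>l2. N (\<lambda>\<alpha>. h \<alpha> - x \<alpha>) < ereal e" using bexI[of _ y] c00_l2[OF y(1)] N_swap[of y x] y(2) by auto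
qed simp

end



definition tA :: "'a set \<Rightarrow> ('a \<Rightarrow> real) \<Rightarrow> real" where
  "tA A z = L2_set z A"

definition tD :: "'a::linorder set set \<Rightarrow> ('a \<Rightarrow> real) \<Rightarrow> real" where
  "tD D z = L2_set (\<lambda>p. z (Min p) - z (Max p)) D"

lemma L2_set_scale: "L2_set (\<lambda>i. c * f i) A = \<bar>c\<bar> * L2_set f A"
  by (simp add: L2_set_def power_mult_distrib real_sqrt_mult flip: sum_distrib_left)

lemma good_A: assumes "S \<noteq> {}" shows "good S tA"
  unfolding good_def
proof (intro conjI allI impI)
  fix s x y show "tA s (\<lambda>\<alpha>. x \<alpha> + y \<alpha>) \<le> tA s x + tA s y"
    unfolding tA_def by (rule L2_set_triangle_ineq)
next
  fix s x c show "tA s (\<lambda>\<alpha>. c * x \<alpha>) = \<bar>c\<bar> * tA s x"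
    unfolding tA_def by (rule L2_set_scale)
next
  fix s and z :: "nat \<Rightarrow> 'a \<Rightarrow> real" and z0 assume "\<forall>\<alpha>. (\<lambda>m. z m \<alpha>) \<longlonglongrightarrow> z0 \<alpha>"
  then show "(\<lambda>m. tA s (z m)) \<longlonglongrightarrow> tA s z0"
    unfolding tA_def L2_set_def by (auto intro!: tendsto_intros)
qed (use assms in \<open>auto simp: tA_def\<close>)

lemma good_D: assumes "S \<noteq> {}" shows "good S tD"
  unfolding good_def
proof (intro conjI allI impI)
  fix s and x y :: "'a \<Rightarrow> real"
  have "(\<lambda>p. (x (Min p) + y (Min p)) - (x (Max p) + y (Max p))) =
        (\<lambda>p. (x (Min p) - x (Max p)) + (y (Min p) - y (Max p)))" by (rule ext) linarith
  then show "tD s (\<lambda>\<alpha>. x \<alpha> + y \<alpha>) \<le> tD s x + tD s y"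
    unfolding tD_def by (simp add: L2_set_triangle_ineq)
next
  fix s and x :: "'a \<Rightarrow> real" and c :: real
  have "(\<lambda>p. c * x (Min p) - c * x (Max p)) = (\<lambda>p. c * (x (Min p) - x (Max p)))"
    by (simp add: algebra_simps)
  then show "tD s (\<lambda>\<alpha>. c * x \<alpha>) = \<bar>c\<bar> * tD s x"
    unfolding tD_def by (simp add: L2_set_scale)
next
  fix s and z :: "nat \<Rightarrow> 'a \<Rightarrow> real" and z0 assume "\<forall>\<alpha>. (\<lambda>m. z m \<alpha>) \<longlonglongrightarrow> z0 \<alpha>"
  then show "(\<lambda>m. tD s (z m)) \<longlonglongrightarrow> tD s z0"
    unfolding tD_def L2_set_def by (auto intro!: tendsto_intros)
qed (use assms in \<open>auto simp: tD_def\<close>)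

lemma normAD_eq: "normAD \<A> \<D> = NN \<D> tD \<A> tA"
  by (rule ext) (simp add: normAD_def nuD_def normA_def NN_def qq_def tA_def tD_def L2_set_def)

lemma XAD_eq: "XAD \<A> \<D> = XX \<D> tD \<A> tA"
  unfolding XAD_def XX_def normAD_eq ..

lemma dom_A: assumes "\<forall>\<alpha>. {\<alpha>} \<in> \<A>" shows "\<forall>x \<alpha>. ereal \<bar>x \<alpha>\<bar> \<le> qq \<A> tA x"
proof (intro allI)
  fix x :: "'a \<Rightarrow> real" and \<alpha>
  have "ereal (tA {\<alpha>} x) \<le> qq \<A> tA x" unfolding qq_def using assms by (intro SUP_upper) auto
  then show "ereal \<bar>x \<alpha>\<bar> \<le> qq \<A> tA x" by (simp add: tA_def L2_set_def)
qed

lemma bound_A: assumes "\<forall>A\<in>\<A>. finite A" and "\<forall>G. finite G \<longrightarrow> (\<Sum>\<alpha>\<in>G. (z \<alpha>)^2) \<le> B"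
  shows "qq \<A> tA z \<le> ereal (sqrt B)"
  unfolding q_le tA_def L2_set_def using assms by (auto intro: real_sqrt_le_mono)

lemma pair_basic: assumes "card p = 2" shows "finite p" "p \<noteq> {}" "Min p \<le> Max p"
proof -
  show f: "finite p" "p \<noteq> {}" using assms by (auto intro: card_ge_0_finite)
  show "Min p \<le> Max p" using Min_in[OF f] Max_ge[OF f(1)] by blast
qed

lemma inj_Min: assumes "consecutive_pairs D" shows "inj_on Min D"
proof (rule inj_onI)
  fix a b assume ab: "a \<in> D" "b \<in> D" "Min a = Min b"
  show "a = b"
  proof (rule ccontr)
    assume "a \<noteq> b"
    then have "Max a < Min b \<or> Max b < Min a" using assms ab unfolding consecutive_pairs_def by blast
    moreover have "Min a \<le> Max a" "Min b \<le> Max b" using assms ab pair_basic(3) unfolding consecutive_pairs_def by blast+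
    ultimately show False using ab(3) by auto
  qed
qed

lemma inj_Max: assumes "consecutive_pairs D" shows "inj_on Max D"
proof (rule inj_onI)
  fix a b assume ab: "a \<in> D" "b \<in> D" "Max a = Max b"
  show "a = b"
  proof (rule ccontr)
    assume "a \<noteq> b"
    then have "Max a < Min b \<or> Max b < Min a" using assms ab unfolding consecutive_pairs_def by blast
    moreover have "Min a \<le> Max a" "Min b \<le> Max b" using assms ab pair_basic(3) unfolding consecutive_pairs_def by blast+
    ultimately show False using ab(3) by auto
  qed
qed

lemma bound_D: assumes D: "\<forall>D\<in>\<D>. finite D \<and> consecutive_pairs D"
  and B: "\<forall>G. finite G \<longrightarrow> (\<Sum>\<alpha>\<in>G. (z \<alpha>)^2) \<le> B"
  shows "qq \<D> tD z \<le> ereal (2 * sqrt B)"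
  unfolding q_le
proof
  fix D assume "D \<in> \<D>"
  then have fD: "finite D" and cD: "consecutive_pairs D" using D by auto
  have "(\<Sum>p\<in>D. (z (Min p) - z (Max p))^2) \<le> (\<Sum>p\<in>D. 2 * (z (Min p))^2 + 2 * (z (Max p))^2)"
  proof (rule sum_mono)
    fix p show "(z (Min p) - z (Max p))^2 \<le> 2 * (z (Min p))^2 + 2 * (z (Max p))^2"
      by (smt (verit) power2_diff sum_squares_ge_zero power2_sum zero_le_power2)
  qed
  also have "\<dots> = 2 * (\<Sum>\<alpha>\<in>Min ` D. (z \<alpha>)^2) + 2 * (\<Sum>\<alpha>\<in>Max ` D. (z \<alpha>)^2)"
    by (simp add: sum.reindex[OF inj_Min[OF cD]] sum.reindex[OF inj_Max[OF cD]] sum.distrib sum_distrib_left)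
  also have "\<dots> \<le> 2 * B + 2 * B" using B fD by (intro add_mono mult_left_mono) auto
  finally have "(\<Sum>p\<in>D. (z (Min p) - z (Max p))^2) \<le> 2^2 * B" by simp
  then have "sqrt (\<Sum>p\<in>D. (z (Min p) - z (Max p))^2) \<le> sqrt (2^2 * B)" by (rule real_sqrt_le_mono)
  also have "\<dots> = 2 * sqrt B" by (simp add: real_sqrt_mult)
  finally show "tD D z \<le> 2 * sqrt B" unfolding tD_def L2_set_def .
qed

lemma bound_N: assumes A: "\<forall>A\<in>\<A>. finite A" and D: "\<forall>D\<in>\<D>. finite D \<and> consecutive_pairs D"
  shows "\<forall>z B. (\<forall>G. finite G \<longrightarrow> (\<Sum>\<alpha>\<in>G. (z \<alpha>)^2) \<le> B) \<longrightarrow> NN \<D> tD \<A> tA z \<le> ereal (3 * sqrt B)"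
proof (intro allI impI)
  fix z :: "'a \<Rightarrow> real" and B assume B: "\<forall>G. finite G \<longrightarrow> (\<Sum>\<alpha>\<in>G. (z \<alpha>)^2) \<le> B"
  have "NN \<D> tD \<A> tA z \<le> ereal (2 * sqrt B) + ereal (sqrt B)"
    unfolding NN_def by (intro add_mono bound_D[OF D B] bound_A[OF A B])
  then show "NN \<D> tD \<A> tA z \<le> ereal (3 * sqrt B)" by simp
qed

theorem proposition2p6:
  fixes \<A> :: "'a::wellorder set set" and \<D> :: "'a set set set"
  assumes omega1_uncountable: "\<not> countable (UNIV :: 'a set)"
    and omega1_segments: "\<forall>a::'a. countable {..<a}"
    and A_finite: "\<forall>A\<in>\<A>. finite A"
    and A_hereditary: "\<forall>A\<in>\<A>. \<forall>B. B \<subseteq> A \<longrightarrow> B \<in> \<A>"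
    and A_singletons: "\<forall>\<alpha>. {\<alpha>} \<in> \<A>"
    and D_finite: "\<forall>D\<in>\<D>. finite D \<and> consecutive_pairs D"
    and D_pairs: "\<forall>p::'a set. card p = 2 \<longrightarrow> {p} \<in> \<D>"
  shows "banach_wrt (XAD \<A> \<D>) (normAD \<A> \<D>) \<and>
         l2_generated TYPE('a \<Rightarrow> real) (XAD \<A> \<D>) (normAD \<A> \<D>)"
proof -
  have An: "\<A> \<noteq> {}" using A_singletons by blast
  obtain a b :: 'a where "a \<noteq> b"
    using omega1_uncountable by (metis UNIV_eq_I countable_empty countable_insert singletonI)
  then have "card {a, b} = 2" by simp
  then have Dn: "\<D> \<noteq> {}" using D_pairs by blast
  note g1 = good_D[OF Dn] and g2 = good_A[OF An]
  show ?thesis unfolding XAD_eq normAD_eq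
    using banach_generic[OF g1 g2 dom_A[OF A_singletons]]
      l2_generic[OF g1 g2 bound_N[OF A_finite D_finite]] by blast
qed

end
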